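(* Let $n\ge 5$ and let $f$ be an RDF of $P(n,2)$ of weight $\gamma_R(P(n,2))$ with $|V_2|$ minimum among all such minimum-weight RDFs. For any index $i$, if $r_f(V'(i,7)) \le 0.5$, then $v_{i+2}\notin V_2$ and $v_{i+4}\notin V_2$.
   Context: For integers $n \ge 3$ and $1 \le k < n/2$, the generalized Petersen graph $P(n,k)$ has vertex set $\{v_i, u_i : 0 \le i \le n-1\}$ and edge set $\{v_iv_{i+1},\ v_iu_i,\ u_iu_{i+k} : 0 \le i \le n-1\}$, with subscripts taken modulo $n$. A Roman domination function (RDF) of a graph $G$ is a function $f: V(G)\to\{0,1,2\}$ such that every vertex $u$ with $f(u)=0$ is adjacent to at least one vertex $v$ with $f(v)=2$. Its weight is $\sum_{u\in V(G)} f(u)$; $\gamma_R(G)$ is the minimum weight of an RDF of $G$. For an RDF $f$ write $V_i=\{w: f(w)=i\}$, $i=0,1,2$. Define $g_f(w)=0.5$ if $w\in V_2$, $g_f(w)=1$ if $w\in V_1$, and $g_f(w)=0.5\,|N(w)\cap V_2|$ if $w\in V_0$, where $N(w)$ is the set of neighbors of $w$. Let $r_f(w)=g_f(w)-0.5$ and, for $S\subseteq V(P(n,2))$, $r_f(S)=\sum_{w\in S} r_f(w)$. For an integer $i$ and $t\ge 1$, $V'(i,t)=\{v_j,u_j : i\le j\le i+t-1\}$ (subscripts modulo $n$). *)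

theory Defs
  imports Complex_Main
begin

text \<open>Vertices of the generalized Petersen graph: outer vertices v_i and inner vertices u_i.\<close>
datatype pvert = V nat | U nat

definition gp_verts :: "nat \<Rightarrow> pvert set" where
  "gp_verts n = {V i | i. i < n} \<union> {U i | i. i < n}"

definition gp_edge0 :: "nat \<Rightarrow> nat \<Rightarrow> pvert \<Rightarrow> pvert \<Rightarrow> bool" where
  "gp_edge0 n k x y \<longleftrightarrow> (\<exists>i<n. (x = V i \<and> y = V ((i + 1) mod n))
                              \<or> (x = V i \<and> y = U i)
                              \<or> (x = U i \<and> y = U ((i + k) mod n)))"

definition gp_adj :: "nat \<Rightarrow> nat \<Rightarrow> pvert \<Rightarrow> pvert \<Rightarrow> bool" where
  "gp_adj n k x y \<longleftrightarrow> gp_edge0 n k x y \<or> gp_edge0 n k y x"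

definition gp_nbhd :: "nat \<Rightarrow> nat \<Rightarrow> pvert \<Rightarrow> pvert set" where
  "gp_nbhd n k w = {x. gp_adj n k w x}"

text \<open>Roman domination function on P(n,k) (values outside the vertex set are irrelevant).\<close>
definition is_RDF :: "nat \<Rightarrow> nat \<Rightarrow> (pvert \<Rightarrow> nat) \<Rightarrow> bool" where
  "is_RDF n k f \<longleftrightarrow> (\<forall>w\<in>gp_verts n. f w \<in> {0,1,2}) \<and>
     (\<forall>w\<in>gp_verts n. f w = 0 \<longrightarrow> (\<exists>x. gp_adj n k w x \<and> f x = 2))"

definition rdf_weight :: "nat \<Rightarrow> (pvert \<Rightarrow> nat) \<Rightarrow> nat" where
  "rdf_weight n f = (\<Sum>w\<in>gp_verts n. f w)"

definition gammaR :: "nat \<Rightarrow> nat \<Rightarrow> nat" where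
  "gammaR n k = (LEAST m. \<exists>f. is_RDF n k f \<and> rdf_weight n f = m)"

definition Vset :: "nat \<Rightarrow> (pvert \<Rightarrow> nat) \<Rightarrow> nat \<Rightarrow> pvert set" where
  "Vset n f j = {w \<in> gp_verts n. f w = j}"

definition g_f :: "nat \<Rightarrow> nat \<Rightarrow> (pvert \<Rightarrow> nat) \<Rightarrow> pvert \<Rightarrow> real" where
  "g_f n k f w = (if f w = 2 then 0.5 else if f w = 1 then 1
                  else 0.5 * real (card (gp_nbhd n k w \<inter> Vset n f 2)))"

definition r_f :: "nat \<Rightarrow> nat \<Rightarrow> (pvert \<Rightarrow> nat) \<Rightarrow> pvert \<Rightarrow> real" where
  "r_f n k f w = g_f n k f w - 0.5"

definition r_f_set :: "nat \<Rightarrow> nat \<Rightarrow> (pvert \<Rightarrow> nat) \<Rightarrow> pvert set \<Rightarrow> real" where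
  "r_f_set n k f S = (\<Sum>w\<in>S. r_f n k f w)"

definition Vprime :: "nat \<Rightarrow> int \<Rightarrow> nat \<Rightarrow> pvert set" where
  "Vprime n i t = {V (nat (j mod int n)) | j. i \<le> j \<and> j \<le> i + int t - 1}
                \<union> {U (nat (j mod int n)) | j. i \<le> j \<and> j \<le> i + int t - 1}"

definition idx :: "nat \<Rightarrow> int \<Rightarrow> nat" where
  "idx n j = nat (j mod int n)"

end

theory Submission
  imports Defs
begin

lemma idx_lt: "0 < n \<Longrightarrow> idx n j < n"
  unfolding idx_def by (simp add: nat_less_iff)

lemma int_idx: "0 < n \<Longrightarrow> int (idx n j) = j mod int n"
  unfolding idx_def by simp

lemma idx_eq_iff: "0 < n \<Longrightarrow> idx n j = idx n k \<longleftrightarrow> j mod int n = k mod int n"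
  by (metis int_idx of_nat_eq_iff)

lemma idx_of_nat: "m < n \<Longrightarrow> idx n (int m) = m"
  unfolding idx_def by (simp add: zmod_int[symmetric])

lemma idx_add_nat: "0 < n \<Longrightarrow> (idx n j + c) mod n = idx n (j + int c)"
proof -
  assume n: "0 < n"
  have "int ((idx n j + c) mod n) = (int (idx n j) + int c) mod int n"
    by (simp add: zmod_int)
  also have "\<dots> = (j mod int n + int c) mod int n" using int_idx[OF n] by simp
  also have "\<dots> = (j + int c) mod int n" by (simp add: mod_add_left_eq)
  also have "\<dots> = int (idx n (j + int c))" using int_idx[OF n] by simp
  finally show ?thesis by simp
qed

lemma idx_sub_iff: "0 < n \<Longrightarrow> i < n \<Longrightarrow> ((i + c) mod n = idx n j \<longleftrightarrow> i = idx n (j - int c))"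
proof -
  assume n: "0 < n" and i: "i < n"
  have i': "i = idx n (int i)" using idx_of_nat[OF i] by simp
  have "(i + c) mod n = idx n (int i + int c)" using idx_add_nat[OF n, of "int i" c] i' by simp
  hence "((i + c) mod n = idx n j) \<longleftrightarrow> (int i + int c) mod int n = j mod int n"
    using idx_eq_iff[OF n] by simp
  also have "\<dots> \<longleftrightarrow> int i mod int n = (j - int c) mod int n"
    by (simp add: mod_eq_dvd_iff algebra_simps)
  also have "\<dots> \<longleftrightarrow> i = idx n (j - int c)"
    using idx_eq_iff[OF n, of "int i" "j - int c"] idx_of_nat[OF i] by simp
  finally show ?thesis .
qed

lemma adjV: assumes n: "5 \<le> n"
  shows "gp_adj n 2 (V (idx n j)) y \<longleftrightarrow>
     y = V (idx n (j - 1)) \<or> y = V (idx n (j + 1)) \<or> y = U (idx n j)"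
proof -
  have n0: "0 < n" using n by simp
  define m where "m = idx n j"
  have m: "m < n" using idx_lt[OF n0] m_def by simp
  have e1: "(m + 1) mod n = idx n (j + 1)" using idx_add_nat[OF n0, of j 1] m_def by simp
  have e2: "\<And>i. i < n \<Longrightarrow> ((i + 1) mod n = m \<longleftrightarrow> i = idx n (j - 1))"
    using idx_sub_iff[OF n0, of _ 1 j] m_def by simp
  have l1: "idx n (j - 1) < n" using idx_lt[OF n0] .
  have "gp_adj n 2 (V m) y \<longleftrightarrow>
     y = V (idx n (j - 1)) \<or> y = V (idx n (j + 1)) \<or> y = U m"
  proof
    assume "gp_adj n 2 (V m) y"
    then have "gp_edge0 n 2 (V m) y \<or> gp_edge0 n 2 y (V m)" unfolding gp_adj_def .
    then show "y = V (idx n (j - 1)) \<or> y = V (idx n (j + 1)) \<or> y = U m"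
    proof
      assume "gp_edge0 n 2 (V m) y"
      then obtain i where "i < n" "(V m = V i \<and> y = V ((i + 1) mod n))
                              \<or> (V m = V i \<and> y = U i)
                              \<or> (V m = U i \<and> y = U ((i + 2) mod n))" unfolding gp_edge0_def by blast
      then show ?thesis using e1 by auto
    next
      assume "gp_edge0 n 2 y (V m)"
      then obtain i where i: "i < n" "(y = V i \<and> V m = V ((i + 1) mod n))
                              \<or> (y = V i \<and> V m = U i)
                              \<or> (y = U i \<and> V m = U ((i + 2) mod n))" unfolding gp_edge0_def by blast
      then have "y = V i" "(i + 1) mod n = m" by auto
      then show ?thesis using e2[OF i(1)] by simp
    qed
  next
    assume "y = V (idx n (j - 1)) \<or> y = V (idx n (j + 1)) \<or> y = U m"
    then show "gp_adj n 2 (V m) y"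
    proof (elim disjE)
      assume y: "y = V (idx n (j - 1))"
      have "(idx n (j - 1) + 1) mod n = m" using e2[OF l1] by simp
      then have "gp_edge0 n 2 y (V m)" unfolding gp_edge0_def using l1 y by metis
      then show ?thesis unfolding gp_adj_def by blast
    next
      assume y: "y = V (idx n (j + 1))"
      then have "gp_edge0 n 2 (V m) y" unfolding gp_edge0_def using m e1 by metis
      then show ?thesis unfolding gp_adj_def by blast
    next
      assume y: "y = U m"
      then have "gp_edge0 n 2 (V m) y" unfolding gp_edge0_def using m by metis
      then show ?thesis unfolding gp_adj_def by blast
    qed
  qed
  then show ?thesis using m_def by simp
qed

lemma adjU: assumes n: "5 \<le> n"
  shows "gp_adj n 2 (U (idx n j)) y \<longleftrightarrow>
     y = V (idx n j) \<or> y = U (idx n (j - 2)) \<or> y = U (idx n (j + 2))"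
proof -
  have n0: "0 < n" using n by simp
  define m where "m = idx n j"
  have m: "m < n" using idx_lt[OF n0] m_def by simp
  have e1: "(m + 2) mod n = idx n (j + 2)" using idx_add_nat[OF n0, of j 2] m_def by simp
  have e2: "\<And>i. i < n \<Longrightarrow> ((i + 2) mod n = m \<longleftrightarrow> i = idx n (j - 2))"
    using idx_sub_iff[OF n0, of _ 2 j] m_def by simp
  have l1: "idx n (j - 2) < n" using idx_lt[OF n0] .
  have "gp_adj n 2 (U m) y \<longleftrightarrow>
     y = V m \<or> y = U (idx n (j - 2)) \<or> y = U (idx n (j + 2))"
  proof
    assume "gp_adj n 2 (U m) y"
    then have "gp_edge0 n 2 (U m) y \<or> gp_edge0 n 2 y (U m)" unfolding gp_adj_def .
    then show "y = V m \<or> y = U (idx n (j - 2)) \<or> y = U (idx n (j + 2))"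
    proof
      assume "gp_edge0 n 2 (U m) y"
      then obtain i where "i < n" "(U m = V i \<and> y = V ((i + 1) mod n))
                              \<or> (U m = V i \<and> y = U i)
                              \<or> (U m = U i \<and> y = U ((i + 2) mod n))" unfolding gp_edge0_def by blast
      then show ?thesis using e1 by auto
    next
      assume "gp_edge0 n 2 y (U m)"
      then obtain i where i: "i < n" "(y = V i \<and> U m = V ((i + 1) mod n))
                              \<or> (y = V i \<and> U m = U i)
                              \<or> (y = U i \<and> U m = U ((i + 2) mod n))" unfolding gp_edge0_def by blast
      then have "(y = V i \<and> i = m) \<or> (y = U i \<and> (i + 2) mod n = m)" by auto
      then show ?thesis using e2[OF i(1)] by auto
    qed
  next
    assume "y = V m \<or> y = U (idx n (j - 2)) \<or> y = U (idx n (j + 2))"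
    then show "gp_adj n 2 (U m) y"
    proof (elim disjE)
      assume y: "y = V m"
      then have "gp_edge0 n 2 y (U m)" unfolding gp_edge0_def using m by metis
      then show ?thesis unfolding gp_adj_def by blast
    next
      assume y: "y = U (idx n (j - 2))"
      have "(idx n (j - 2) + 2) mod n = m" using e2[OF l1] by simp
      then have "gp_edge0 n 2 y (U m)" unfolding gp_edge0_def using l1 y by metis
      then show ?thesis unfolding gp_adj_def by blast
    next
      assume y: "y = U (idx n (j + 2))"
      then have "gp_edge0 n 2 (U m) y" unfolding gp_edge0_def using m e1 by metis
      then show ?thesis unfolding gp_adj_def by blast
    qed
  qed
  then show ?thesis using m_def by simp
qed

lemma verts_idx: "0 < n \<Longrightarrow> V (idx n j) \<in> gp_verts n \<and> U (idx n j) \<in> gp_verts n"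
  unfolding gp_verts_def using idx_lt by blast

lemma verts_cases: "x \<in> gp_verts n \<Longrightarrow> (\<exists>j. x = V (idx n j)) \<or> (\<exists>j. x = U (idx n j))"
proof -
  assume "x \<in> gp_verts n"
  then obtain i where "i < n" "x = V i \<or> x = U i" unfolding gp_verts_def by blast
  then show ?thesis using idx_of_nat[of i n] by metis
qed

lemma finite_verts: "finite (gp_verts n)"
proof -
  have "gp_verts n = V ` {..<n} \<union> U ` {..<n}" unfolding gp_verts_def by auto
  thus ?thesis by simp
qed

lemma idx_ne: "0 < n \<Longrightarrow> \<not> (int n dvd (j - k)) \<Longrightarrow> idx n j \<noteq> idx n k"
  using idx_eq_iff mod_eq_dvd_iff by blast

lemma adj_sym: "gp_adj n k x y \<longleftrightarrow> gp_adj n k y x"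
  unfolding gp_adj_def by blast

lemma adj_verts: "0 < n \<Longrightarrow> gp_adj n k x y \<Longrightarrow> y \<in> gp_verts n \<and> x \<in> gp_verts n"
  unfolding gp_adj_def gp_edge0_def gp_verts_def by auto

definition c2 :: "int \<Rightarrow> int" where "c2 p = (if p = 2 then 1 else 0)"
definition rn :: "int \<Rightarrow> int \<Rightarrow> int \<Rightarrow> int \<Rightarrow> int" where
 "rn x p q s = (if x = 2 then 0 else if x = 1 then 1 else c2 p + c2 q + c2 s - 1)"

lemma card3: "a \<noteq> b \<Longrightarrow> a \<noteq> c \<Longrightarrow> b \<noteq> c \<Longrightarrow>
  card ({a, b, c} \<inter> S) = (if a \<in> S then 1 else 0) + (if b \<in> S then 1 else 0) + (if c \<in> S then 1 else 0)"
  by (auto simp: Int_insert_left card_insert_if)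

lemma nbhdV: "5 \<le> n \<Longrightarrow> gp_nbhd n 2 (V (idx n j)) = {V (idx n (j - 1)), V (idx n (j + 1)), U (idx n j)}"
  unfolding gp_nbhd_def using adjV by auto

lemma nbhdU: "5 \<le> n \<Longrightarrow> gp_nbhd n 2 (U (idx n j)) = {V (idx n j), U (idx n (j - 2)), U (idx n (j + 2))}"
  unfolding gp_nbhd_def using adjU by auto

lemma Vset2: "0 < n \<Longrightarrow> V (idx n j) \<in> Vset n f 2 \<longleftrightarrow> f (V (idx n j)) = 2"
  "0 < n \<Longrightarrow> U (idx n j) \<in> Vset n f 2 \<longleftrightarrow> f (U (idx n j)) = 2"
  unfolding Vset_def using verts_idx by auto

lemma distV: "5 \<le> n \<Longrightarrow> idx n (j - 1) \<noteq> idx n (j + 1)"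
proof -
  assume n: "5 \<le> n"
  have "\<not> int n dvd ((j - 1) - (j + 1))"
  proof
    assume "int n dvd ((j - 1) - (j + 1))"
    then have "int n dvd 2" by simp
    then have "int n \<le> 2" by (rule zdvd_imp_le) simp
    then show False using n by simp
  qed
  then show ?thesis using idx_ne[of n] n by simp
qed

lemma distU: "5 \<le> n \<Longrightarrow> idx n (j - 2) \<noteq> idx n (j + 2)"
proof -
  assume n: "5 \<le> n"
  have "\<not> int n dvd ((j - 2) - (j + 2))"
  proof
    assume "int n dvd ((j - 2) - (j + 2))"
    then have "int n dvd 4" by simp
    then have "int n \<le> 4" by (rule zdvd_imp_le) simp
    then show False using n by simp
  qed
  then show ?thesis using idx_ne[of n] n by simp
qed

lemma rV: assumes n: "5 \<le> n"
  shows "r_f n 2 f (V (idx n j)) = real_of_int (rn (int (f (V (idx n j)))) (int (f (V (idx n (j - 1)))))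
      (int (f (V (idx n (j + 1))))) (int (f (U (idx n j))))) / 2"
proof -
  have n0: "0 < n" using n by simp
  have c: "card (gp_nbhd n 2 (V (idx n j)) \<inter> Vset n f 2) =
     (if f (V (idx n (j - 1))) = 2 then 1 else 0) + (if f (V (idx n (j + 1))) = 2 then 1 else 0)
     + (if f (U (idx n j)) = 2 then 1 else 0)"
    unfolding nbhdV[OF n] using card3 distV[OF n, of j] Vset2[OF n0] by simp
  show ?thesis unfolding r_f_def g_f_def rn_def c2_def c by auto
qed

lemma rU: assumes n: "5 \<le> n"
  shows "r_f n 2 f (U (idx n j)) = real_of_int (rn (int (f (U (idx n j)))) (int (f (V (idx n j))))
      (int (f (U (idx n (j - 2))))) (int (f (U (idx n (j + 2)))))) / 2"
proof -
  have n0: "0 < n" using n by simp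
  have c: "card (gp_nbhd n 2 (U (idx n j)) \<inter> Vset n f 2) =
     (if f (V (idx n j)) = 2 then 1 else 0) + (if f (U (idx n (j - 2))) = 2 then 1 else 0)
     + (if f (U (idx n (j + 2))) = 2 then 1 else 0)"
    unfolding nbhdU[OF n] using card3 distU[OF n, of j] Vset2[OF n0] by simp
  show ?thesis unfolding r_f_def g_f_def rn_def c2_def c by auto
qed

lemma idx_ne_small: assumes n: "5 \<le> n" and c: "0 < \<bar>c\<bar>" "\<bar>c\<bar> < int n"
  shows "idx n (j + c) \<noteq> idx n j"
proof -
  have "\<not> int n dvd ((j + c) - j)"
  proof
    assume "int n dvd ((j + c) - j)"
    then have "int n dvd \<bar>c\<bar>" by simp
    then have "int n \<le> \<bar>c\<bar>" by (rule zdvd_imp_le) (use c in simp)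
    then show False using c by simp
  qed
  then show ?thesis using idx_ne[of n] n by simp
qed

lemma adj_irrefl: assumes n: "5 \<le> n" shows "\<not> gp_adj n 2 x x"
proof
  assume a: "gp_adj n 2 x x"
  have n0: "0 < n" using n by simp
  have "x \<in> gp_verts n" using adj_verts[OF n0 a] by simp
  then consider (v) j where "x = V (idx n j)" | (u) j where "x = U (idx n j)" using verts_cases by blast
  then show False
  proof cases
    case v
    have "idx n (j + -1) \<noteq> idx n j" "idx n (j + 1) \<noteq> idx n j"
      using idx_ne_small[OF n, of "-1" j] idx_ne_small[OF n, of 1 j] n by auto
    then show False using a v adjV[OF n, of j x] by simp
  next
    case u
    have "idx n (j + -2) \<noteq> idx n j" "idx n (j + 2) \<noteq> idx n j"
      using idx_ne_small[OF n, of "-2" j] idx_ne_small[OF n, of 2 j] n by auto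
    then show False using a u adjU[OF n, of j x] by simp
  qed
qed

lemma nbhd_fin: assumes n: "5 \<le> n" and x: "x \<in> gp_verts n"
  shows "finite (gp_nbhd n 2 x) \<and> card (gp_nbhd n 2 x) \<le> 3"
proof -
  consider (v) j where "x = V (idx n j)" | (u) j where "x = U (idx n j)" using verts_cases[OF x] by blast
  then show ?thesis
  proof cases
    case v then show ?thesis using nbhdV[OF n, of j] by (simp add: card_insert_if)
  next
    case u then show ?thesis using nbhdU[OF n, of j] by (simp add: card_insert_if)
  qed
qed

lemma gam_le: "is_RDF n 2 g \<Longrightarrow> gammaR n 2 \<le> rdf_weight n g"
  unfolding gammaR_def by (rule Least_le) blast

lemma Xlem:
  assumes n: "5 \<le> n" and rdf: "is_RDF n 2 f" and w: "rdf_weight n f = gammaR n 2"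
   and mn: "\<forall>g. is_RDF n 2 g \<and> rdf_weight n g = gammaR n 2 \<longrightarrow> card (Vset n f 2) \<le> card (Vset n g 2)"
   and x: "x \<in> gp_verts n" "f x = 2" and a: "gp_adj n 2 x y"
  shows "f y = 0"
proof (rule ccontr)
  assume ny: "f y \<noteq> 0"
  have n0: "0 < n" using n by simp
  have y: "y \<in> gp_verts n" using adj_verts[OF n0 a] by simp
  have fy: "f y = 1 \<or> f y = 2" using rdf y ny unfolding is_RDF_def by auto
  have xy: "x \<noteq> y" using adj_irrefl[OF n] a by auto
  have ayx: "gp_adj n 2 y x" using a adj_sym by blast
  show False
  proof (cases "f y = 1")
    case True
    define g where "g = f(y := 0)"
    have rg: "is_RDF n 2 g"
      unfolding is_RDF_def
    proof (intro conjI ballI impI)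
      fix w assume "w \<in> gp_verts n" then show "g w \<in> {0,1,2}" using rdf unfolding is_RDF_def g_def by auto
    next
      fix w assume ww: "w \<in> gp_verts n" "g w = 0"
      show "\<exists>z. gp_adj n 2 w z \<and> g z = 2"
      proof (cases "w = y")
        case True then show ?thesis using ayx x(2) xy unfolding g_def by auto
      next
        case False then have "f w = 0" using ww g_def by simp
        then obtain z where z: "gp_adj n 2 w z" "f z = 2" using rdf ww(1) unfolding is_RDF_def by blast
        moreover have "z \<noteq> y" using True z by auto
        ultimately show ?thesis unfolding g_def by auto
      qed
    qed
    have "rdf_weight n f = f y + sum f (gp_verts n - {y})"
      unfolding rdf_weight_def using sum.remove[OF finite_verts y] by simp
    moreover have "rdf_weight n g = g y + sum g (gp_verts n - {y})"
      unfolding rdf_weight_def using sum.remove[OF finite_verts y] by simp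
    moreover have "sum g (gp_verts n - {y}) = sum f (gp_verts n - {y})"
      unfolding g_def by (rule sum.cong) auto
    ultimately have "rdf_weight n f = rdf_weight n g + 1" using True unfolding g_def by simp
    then show False using gam_le[OF rg] w by simp
  next
    case False
    then have fy2: "f y = 2" using fy by simp
    define g where "g = (\<lambda>w. if w = x then 0 else if gp_adj n 2 x w \<and> f w = 0 then 1 else f w)"
    define D where "D = {w \<in> gp_verts n. gp_adj n 2 x w \<and> f w = 0}"
    have rg: "is_RDF n 2 g"
      unfolding is_RDF_def
    proof (intro conjI ballI impI)
      fix w assume "w \<in> gp_verts n" then show "g w \<in> {0,1,2}" using rdf unfolding is_RDF_def g_def by auto
    next
      fix w assume ww: "w \<in> gp_verts n" "g w = 0"
      show "\<exists>z. gp_adj n 2 w z \<and> g z = 2"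
      proof (cases "w = x")
        case True
        have "g y = 2" using fy2 xy unfolding g_def by simp
        then show ?thesis using a True by blast
      next
        case False
        then have fw: "f w = 0" "\<not> gp_adj n 2 x w" using ww unfolding g_def by (auto split: if_splits)
        then obtain z where z: "gp_adj n 2 w z" "f z = 2" using rdf ww(1) unfolding is_RDF_def by blast
        moreover have "z \<noteq> x" using z fw adj_sym by blast
        ultimately have "g z = 2" unfolding g_def by simp
        then show ?thesis using z by blast
      qed
    qed
    have eq: "\<And>w. w \<in> gp_verts n \<Longrightarrow> g w + (if w = x then 2 else 0) = f w + (if w \<in> D then 1 else 0)"
      unfolding g_def D_def using x(2) by auto
    have "(\<Sum>w\<in>gp_verts n. g w + (if w = x then 2 else 0)) = (\<Sum>w\<in>gp_verts n. f w + (if w \<in> D then 1 else 0))"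
      using eq by (rule sum.cong[OF refl])
    then have "rdf_weight n g + (\<Sum>w\<in>gp_verts n. if w = x then 2 else 0) = rdf_weight n f + (\<Sum>w\<in>gp_verts n. if w \<in> D then 1 else 0)"
      unfolding rdf_weight_def sum.distrib .
    moreover have "(\<Sum>w\<in>gp_verts n. if w = x then 2 else 0) = (2::nat)"
      using x(1) finite_verts by simp
    moreover have "(\<Sum>w\<in>gp_verts n. if w \<in> D then 1 else 0) = card (gp_verts n \<inter> D)"
      using sum.inter_restrict[OF finite_verts, where g="\<lambda>_. 1::nat" and B=D] by simp
    moreover have "gp_verts n \<inter> D = D" unfolding D_def by auto
    ultimately have wt: "rdf_weight n g + 2 = rdf_weight n f + card D" by simp
    have sub: "D \<subseteq> gp_nbhd n 2 x - {y}" unfolding D_def gp_nbhd_def using fy2 by auto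
    have fN: "finite (gp_nbhd n 2 x)" and cN: "card (gp_nbhd n 2 x) \<le> 3" using nbhd_fin[OF n x(1)] by auto
    have yN: "y \<in> gp_nbhd n 2 x" unfolding gp_nbhd_def using a by simp
    have c1: "card (gp_nbhd n 2 x - {y}) = card (gp_nbhd n 2 x) - 1" using card_Diff_singleton[OF yN] .
    have "card D \<le> card (gp_nbhd n 2 x - {y})" using card_mono[OF _ sub] fN by simp
    then have "card D \<le> 2" using c1 cN by linarith
    then have "rdf_weight n g \<le> rdf_weight n f" using wt by simp
    then have "rdf_weight n g = gammaR n 2" using gam_le[OF rg] w by simp
    then have "card (Vset n f 2) \<le> card (Vset n g 2)" using mn rg by blast
    moreover have "Vset n g 2 = Vset n f 2 - {x}" unfolding Vset_def g_def by auto
    moreover have "x \<in> Vset n f 2" unfolding Vset_def using x by simp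
    moreover have "finite (Vset n f 2)" unfolding Vset_def using finite_verts by simp
    ultimately show False by (metis card_Diff1_less not_le)
  qed
qed

lemma r_nonneg: assumes n: "5 \<le> n" and rdf: "is_RDF n 2 f" and w: "w \<in> gp_verts n"
  shows "0 \<le> r_f n 2 f w"
proof -
  have fw: "f w \<in> {0,1,2}" using rdf w unfolding is_RDF_def by auto
  show ?thesis
  proof (cases "f w = 0")
    case True
    then obtain z where z: "gp_adj n 2 w z" "f z = 2" using rdf w unfolding is_RDF_def by blast
    have "z \<in> gp_nbhd n 2 w \<inter> Vset n f 2"
      using z adj_verts[of n 2 w z] n unfolding gp_nbhd_def Vset_def by auto
    moreover have "finite (gp_nbhd n 2 w \<inter> Vset n f 2)" using nbhd_fin[OF n w] by simp
    ultimately have "card (gp_nbhd n 2 w \<inter> Vset n f 2) \<ge> 1"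
      using card_gt_0_iff by (metis One_nat_def Suc_leI empty_iff)
    then show ?thesis unfolding r_f_def g_f_def using True by simp
  next
    case False then show ?thesis using fw unfolding r_f_def g_f_def by auto
  qed
qed

lemma Vprime_sub: "0 < n \<Longrightarrow> Vprime n i t \<subseteq> gp_verts n"
proof
  fix x assume n: "0 < n" and x: "x \<in> Vprime n i t"
  then obtain j where "x = V (idx n j) \<or> x = U (idx n j)" unfolding Vprime_def idx_def by blast
  then show "x \<in> gp_verts n" using verts_idx[OF n] by blast
qed

lemma inj_idx: assumes n: "0 < n" and t: "t \<le> n"
  shows "inj_on (\<lambda>k::nat. idx n (i + int k)) {..<t}"
proof (rule inj_onI)
  fix a b :: nat assume a: "a \<in> {..<t}" and b: "b \<in> {..<t}" and e: "idx n (i + int a) = idx n (i + int b)"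
  have "(i + int a) mod int n = (i + int b) mod int n" using idx_eq_iff[OF n] e by blast
  then have "int n dvd ((i + int a) - (i + int b))" by (rule mod_eq_dvd_iff[THEN iffD1])
  then have d: "int n dvd (int a - int b)" by simp
  have l: "\<bar>int a - int b\<bar> < int n" using a b t by (simp add: abs_if)
  show "a = b"
  proof (rule ccontr)
    assume ne: "a \<noteq> b"
    have "int n dvd \<bar>int a - int b\<bar>" using d by simp
    moreover have "0 < \<bar>int a - int b\<bar>" using ne by simp
    ultimately have "int n \<le> \<bar>int a - int b\<bar>" by (rule zdvd_imp_le)
    then show False using l by simp
  qed
qed
lemma core7:
  fixes A B :: "int \<Rightarrow> int"
  assumes bA: "\<And>k. 0 \<le> A k \<and> A k \<le> 2" and bB: "\<And>k. 0 \<le> B k \<and> B k \<le> 2"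
  and rdfV: "\<And>k. A k = 0 \<Longrightarrow> A (k - 1) = 2 \<or> A (k + 1) = 2 \<or> B k = 2"
  and rdfU: "\<And>k. B k = 0 \<Longrightarrow> A k = 2 \<or> B (k - 2) = 2 \<or> B (k + 2) = 2"
  and xV: "\<And>k. A k = 2 \<Longrightarrow> A (k - 1) = 0 \<and> A (k + 1) = 0 \<and> B k = 0"
  and xU: "\<And>k. B k = 2 \<Longrightarrow> A k = 0 \<and> B (k - 2) = 0 \<and> B (k + 2) = 0"
  and win: "(\<Sum>k<7. rn (A (int k)) (A (int k - 1)) (A (int k + 1)) (B (int k)) + rn (B (int k)) (A (int k)) (B (int k - 2)) (B (int k + 2))) \<le> 1"
  shows "A 2 \<noteq> 2 \<and> A 4 \<noteq> 2"
proof -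
  have h1: "0 \<le> A (-1) \<and> A (-1) \<le> 2" using bA[of "-1"] by simp
  have h2: "0 \<le> A 0 \<and> A 0 \<le> 2" using bA[of "0"] by simp
  have h3: "0 \<le> A 1 \<and> A 1 \<le> 2" using bA[of "1"] by simp
  have h4: "0 \<le> A 2 \<and> A 2 \<le> 2" using bA[of "2"] by simp
  have h5: "0 \<le> A 3 \<and> A 3 \<le> 2" using bA[of "3"] by simp
  have h6: "0 \<le> A 4 \<and> A 4 \<le> 2" using bA[of "4"] by simp
  have h7: "0 \<le> A 5 \<and> A 5 \<le> 2" using bA[of "5"] by simp
  have h8: "0 \<le> A 6 \<and> A 6 \<le> 2" using bA[of "6"] by simp
  have h9: "0 \<le> A 7 \<and> A 7 \<le> 2" using bA[of "7"] by simp
  have h10: "0 \<le> B (-2) \<and> B (-2) \<le> 2" using bB[of "-2"] by simp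
  have h11: "0 \<le> B (-1) \<and> B (-1) \<le> 2" using bB[of "-1"] by simp
  have h12: "0 \<le> B 0 \<and> B 0 \<le> 2" using bB[of "0"] by simp
  have h13: "0 \<le> B 1 \<and> B 1 \<le> 2" using bB[of "1"] by simp
  have h14: "0 \<le> B 2 \<and> B 2 \<le> 2" using bB[of "2"] by simp
  have h15: "0 \<le> B 3 \<and> B 3 \<le> 2" using bB[of "3"] by simp
  have h16: "0 \<le> B 4 \<and> B 4 \<le> 2" using bB[of "4"] by simp
  have h17: "0 \<le> B 5 \<and> B 5 \<le> 2" using bB[of "5"] by simp
  have h18: "0 \<le> B 6 \<and> B 6 \<le> 2" using bB[of "6"] by simp
  have h19: "0 \<le> B 7 \<and> B 7 \<le> 2" using bB[of "7"] by simp
  have h20: "0 \<le> B 8 \<and> B 8 \<le> 2" using bB[of "8"] by simp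
  have h21: "A 0 = 0 \<Longrightarrow> A (-1) = 2 \<or> A 1 = 2 \<or> B 0 = 2" using rdfV[of "0"] by simp
  have h22: "B 0 = 0 \<Longrightarrow> A 0 = 2 \<or> B (-2) = 2 \<or> B 2 = 2" using rdfU[of "0"] by simp
  have h23: "A 1 = 0 \<Longrightarrow> A 0 = 2 \<or> A 2 = 2 \<or> B 1 = 2" using rdfV[of "1"] by simp
  have h24: "B 1 = 0 \<Longrightarrow> A 1 = 2 \<or> B (-1) = 2 \<or> B 3 = 2" using rdfU[of "1"] by simp
  have h25: "A 2 = 0 \<Longrightarrow> A 1 = 2 \<or> A 3 = 2 \<or> B 2 = 2" using rdfV[of "2"] by simp
  have h26: "B 2 = 0 \<Longrightarrow> A 2 = 2 \<or> B 0 = 2 \<or> B 4 = 2" using rdfU[of "2"] by simp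
  have h27: "A 3 = 0 \<Longrightarrow> A 2 = 2 \<or> A 4 = 2 \<or> B 3 = 2" using rdfV[of "3"] by simp
  have h28: "B 3 = 0 \<Longrightarrow> A 3 = 2 \<or> B 1 = 2 \<or> B 5 = 2" using rdfU[of "3"] by simp
  have h29: "A 4 = 0 \<Longrightarrow> A 3 = 2 \<or> A 5 = 2 \<or> B 4 = 2" using rdfV[of "4"] by simp
  have h30: "B 4 = 0 \<Longrightarrow> A 4 = 2 \<or> B 2 = 2 \<or> B 6 = 2" using rdfU[of "4"] by simp
  have h31: "A 5 = 0 \<Longrightarrow> A 4 = 2 \<or> A 6 = 2 \<or> B 5 = 2" using rdfV[of "5"] by simp
  have h32: "B 5 = 0 \<Longrightarrow> A 5 = 2 \<or> B 3 = 2 \<or> B 7 = 2" using rdfU[of "5"] by simp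
  have h33: "A 6 = 0 \<Longrightarrow> A 5 = 2 \<or> A 7 = 2 \<or> B 6 = 2" using rdfV[of "6"] by simp
  have h34: "B 6 = 0 \<Longrightarrow> A 6 = 2 \<or> B 4 = 2 \<or> B 8 = 2" using rdfU[of "6"] by simp
  have h35: "A 0 = 2 \<Longrightarrow> A (-1) = 0 \<and> A 1 = 0 \<and> B 0 = 0" using xV[of "0"] by simp
  have h36: "B 0 = 2 \<Longrightarrow> A 0 = 0 \<and> B (-2) = 0 \<and> B 2 = 0" using xU[of "0"] by simp
  have h37: "A 1 = 2 \<Longrightarrow> A 0 = 0 \<and> A 2 = 0 \<and> B 1 = 0" using xV[of "1"] by simp
  have h38: "B 1 = 2 \<Longrightarrow> A 1 = 0 \<and> B (-1) = 0 \<and> B 3 = 0" using xU[of "1"] by simp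
  have h39: "A 2 = 2 \<Longrightarrow> A 1 = 0 \<and> A 3 = 0 \<and> B 2 = 0" using xV[of "2"] by simp
  have h40: "B 2 = 2 \<Longrightarrow> A 2 = 0 \<and> B 0 = 0 \<and> B 4 = 0" using xU[of "2"] by simp
  have h41: "A 3 = 2 \<Longrightarrow> A 2 = 0 \<and> A 4 = 0 \<and> B 3 = 0" using xV[of "3"] by simp
  have h42: "B 3 = 2 \<Longrightarrow> A 3 = 0 \<and> B 1 = 0 \<and> B 5 = 0" using xU[of "3"] by simp
  have h43: "A 4 = 2 \<Longrightarrow> A 3 = 0 \<and> A 5 = 0 \<and> B 4 = 0" using xV[of "4"] by simp
  have h44: "B 4 = 2 \<Longrightarrow> A 4 = 0 \<and> B 2 = 0 \<and> B 6 = 0" using xU[of "4"] by simp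
  have h45: "A 5 = 2 \<Longrightarrow> A 4 = 0 \<and> A 6 = 0 \<and> B 5 = 0" using xV[of "5"] by simp
  have h46: "B 5 = 2 \<Longrightarrow> A 5 = 0 \<and> B 3 = 0 \<and> B 7 = 0" using xU[of "5"] by simp
  have h47: "A 6 = 2 \<Longrightarrow> A 5 = 0 \<and> A 7 = 0 \<and> B 6 = 0" using xV[of "6"] by simp
  have h48: "B 6 = 2 \<Longrightarrow> A 6 = 0 \<and> B 4 = 0 \<and> B 8 = 0" using xU[of "6"] by simp
  have h49: "A (-1) = 2 \<Longrightarrow> A (-2) = 0 \<and> A 0 = 0 \<and> B (-1) = 0" using xV[of "-1"] by simp
  have h50: "A 7 = 2 \<Longrightarrow> A 6 = 0 \<and> A 8 = 0 \<and> B 7 = 0" using xV[of "7"] by simp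
  have h51: "B (-2) = 2 \<Longrightarrow> A (-2) = 0 \<and> B (-4) = 0 \<and> B 0 = 0" using xU[of "-2"] by simp
  have h52: "B (-1) = 2 \<Longrightarrow> A (-1) = 0 \<and> B (-3) = 0 \<and> B 1 = 0" using xU[of "-1"] by simp
  have h53: "B 7 = 2 \<Longrightarrow> A 7 = 0 \<and> B 5 = 0 \<and> B 9 = 0" using xU[of "7"] by simp
  have h54: "B 8 = 2 \<Longrightarrow> A 8 = 0 \<and> B 6 = 0 \<and> B 10 = 0" using xU[of "8"] by simp
  have h55: "rn (A 0) (A (-1)) (A 1) (B 0) + rn (B 0) (A 0) (B (-2)) (B 2) + rn (A 1) (A 0) (A 2) (B 1) + rn (B 1) (A 1) (B (-1)) (B 3) + rn (A 2) (A 1) (A 3) (B 2) + rn (B 2) (A 2) (B 0) (B 4) + rn (A 3) (A 2) (A 4) (B 3) + rn (B 3) (A 3) (B 1) (B 5) + rn (A 4) (A 3) (A 5) (B 4) + rn (B 4) (A 4) (B 2) (B 6) + rn (A 5) (A 4) (A 6) (B 5) + rn (B 5) (A 5) (B 3) (B 7) + rn (A 6) (A 5) (A 7) (B 6) + rn (B 6) (A 6) (B 4) (B 8) \<le> 1" using win by (simp add: eval_nat_numeral)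
  show ?thesis using h1 h2 h3 h4 h5 h6 h7 h8 h9 h10 h11 h12 h13 h14 h15 h16 h17 h18 h19 h20 h21 h22 h23 h24 h25 h26 h27 h28 h29 h30 h31 h32 h33 h34 h35 h36 h37 h38 h39 h40 h41 h42 h43 h44 h45 h46 h47 h48 h49 h50 h51 h52 h53 h54 h55 unfolding rn_def c2_def by (smt (z3))
qed

lemma core5:
  fixes A B :: "int \<Rightarrow> int"
  assumes bA: "\<And>k. 0 \<le> A k \<and> A k \<le> 2" and bB: "\<And>k. 0 \<le> B k \<and> B k \<le> 2"
  and rdfV: "\<And>k. A k = 0 \<Longrightarrow> A (k - 1) = 2 \<or> A (k + 1) = 2 \<or> B k = 2"
  and rdfU: "\<And>k. B k = 0 \<Longrightarrow> A k = 2 \<or> B (k - 2) = 2 \<or> B (k + 2) = 2"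
  and xV: "\<And>k. A k = 2 \<Longrightarrow> A (k - 1) = 0 \<and> A (k + 1) = 0 \<and> B k = 0"
  and xU: "\<And>k. B k = 2 \<Longrightarrow> A k = 0 \<and> B (k - 2) = 0 \<and> B (k + 2) = 0"
  and pA: "\<And>k. A (k + 5) = A k" and pB: "\<And>k. B (k + 5) = B k"
  and win: "(\<Sum>k<5. rn (A (int k)) (A (int k - 1)) (A (int k + 1)) (B (int k)) + rn (B (int k)) (A (int k)) (B (int k - 2)) (B (int k + 2))) \<le> 1"
  shows "A 2 \<noteq> 2 \<and> A 4 \<noteq> 2"
proof -
  have h1: "0 \<le> A (-1) \<and> A (-1) \<le> 2" using bA[of "-1"] by simp
  have h2: "0 \<le> A 0 \<and> A 0 \<le> 2" using bA[of "0"] by simp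
  have h3: "0 \<le> A 1 \<and> A 1 \<le> 2" using bA[of "1"] by simp
  have h4: "0 \<le> A 2 \<and> A 2 \<le> 2" using bA[of "2"] by simp
  have h5: "0 \<le> A 3 \<and> A 3 \<le> 2" using bA[of "3"] by simp
  have h6: "0 \<le> A 4 \<and> A 4 \<le> 2" using bA[of "4"] by simp
  have h7: "0 \<le> A 5 \<and> A 5 \<le> 2" using bA[of "5"] by simp
  have h8: "0 \<le> B (-2) \<and> B (-2) \<le> 2" using bB[of "-2"] by simp
  have h9: "0 \<le> B (-1) \<and> B (-1) \<le> 2" using bB[of "-1"] by simp
  have h10: "0 \<le> B 0 \<and> B 0 \<le> 2" using bB[of "0"] by simp
  have h11: "0 \<le> B 1 \<and> B 1 \<le> 2" using bB[of "1"] by simp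
  have h12: "0 \<le> B 2 \<and> B 2 \<le> 2" using bB[of "2"] by simp
  have h13: "0 \<le> B 3 \<and> B 3 \<le> 2" using bB[of "3"] by simp
  have h14: "0 \<le> B 4 \<and> B 4 \<le> 2" using bB[of "4"] by simp
  have h15: "0 \<le> B 5 \<and> B 5 \<le> 2" using bB[of "5"] by simp
  have h16: "0 \<le> B 6 \<and> B 6 \<le> 2" using bB[of "6"] by simp
  have h17: "A 0 = 0 \<Longrightarrow> A (-1) = 2 \<or> A 1 = 2 \<or> B 0 = 2" using rdfV[of "0"] by simp
  have h18: "B 0 = 0 \<Longrightarrow> A 0 = 2 \<or> B (-2) = 2 \<or> B 2 = 2" using rdfU[of "0"] by simp
  have h19: "A 1 = 0 \<Longrightarrow> A 0 = 2 \<or> A 2 = 2 \<or> B 1 = 2" using rdfV[of "1"] by simp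
  have h20: "B 1 = 0 \<Longrightarrow> A 1 = 2 \<or> B (-1) = 2 \<or> B 3 = 2" using rdfU[of "1"] by simp
  have h21: "A 2 = 0 \<Longrightarrow> A 1 = 2 \<or> A 3 = 2 \<or> B 2 = 2" using rdfV[of "2"] by simp
  have h22: "B 2 = 0 \<Longrightarrow> A 2 = 2 \<or> B 0 = 2 \<or> B 4 = 2" using rdfU[of "2"] by simp
  have h23: "A 3 = 0 \<Longrightarrow> A 2 = 2 \<or> A 4 = 2 \<or> B 3 = 2" using rdfV[of "3"] by simp
  have h24: "B 3 = 0 \<Longrightarrow> A 3 = 2 \<or> B 1 = 2 \<or> B 5 = 2" using rdfU[of "3"] by simp
  have h25: "A 4 = 0 \<Longrightarrow> A 3 = 2 \<or> A 5 = 2 \<or> B 4 = 2" using rdfV[of "4"] by simp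
  have h26: "B 4 = 0 \<Longrightarrow> A 4 = 2 \<or> B 2 = 2 \<or> B 6 = 2" using rdfU[of "4"] by simp
  have h27: "A 0 = 2 \<Longrightarrow> A (-1) = 0 \<and> A 1 = 0 \<and> B 0 = 0" using xV[of "0"] by simp
  have h28: "B 0 = 2 \<Longrightarrow> A 0 = 0 \<and> B (-2) = 0 \<and> B 2 = 0" using xU[of "0"] by simp
  have h29: "A 1 = 2 \<Longrightarrow> A 0 = 0 \<and> A 2 = 0 \<and> B 1 = 0" using xV[of "1"] by simp
  have h30: "B 1 = 2 \<Longrightarrow> A 1 = 0 \<and> B (-1) = 0 \<and> B 3 = 0" using xU[of "1"] by simp
  have h31: "A 2 = 2 \<Longrightarrow> A 1 = 0 \<and> A 3 = 0 \<and> B 2 = 0" using xV[of "2"] by simp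
  have h32: "B 2 = 2 \<Longrightarrow> A 2 = 0 \<and> B 0 = 0 \<and> B 4 = 0" using xU[of "2"] by simp
  have h33: "A 3 = 2 \<Longrightarrow> A 2 = 0 \<and> A 4 = 0 \<and> B 3 = 0" using xV[of "3"] by simp
  have h34: "B 3 = 2 \<Longrightarrow> A 3 = 0 \<and> B 1 = 0 \<and> B 5 = 0" using xU[of "3"] by simp
  have h35: "A 4 = 2 \<Longrightarrow> A 3 = 0 \<and> A 5 = 0 \<and> B 4 = 0" using xV[of "4"] by simp
  have h36: "B 4 = 2 \<Longrightarrow> A 4 = 0 \<and> B 2 = 0 \<and> B 6 = 0" using xU[of "4"] by simp
  have h37: "A (-1) = 2 \<Longrightarrow> A (-2) = 0 \<and> A 0 = 0 \<and> B (-1) = 0" using xV[of "-1"] by simp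
  have h38: "A 5 = 2 \<Longrightarrow> A 4 = 0 \<and> A 6 = 0 \<and> B 5 = 0" using xV[of "5"] by simp
  have h39: "B (-2) = 2 \<Longrightarrow> A (-2) = 0 \<and> B (-4) = 0 \<and> B 0 = 0" using xU[of "-2"] by simp
  have h40: "B (-1) = 2 \<Longrightarrow> A (-1) = 0 \<and> B (-3) = 0 \<and> B 1 = 0" using xU[of "-1"] by simp
  have h41: "B 5 = 2 \<Longrightarrow> A 5 = 0 \<and> B 3 = 0 \<and> B 7 = 0" using xU[of "5"] by simp
  have h42: "B 6 = 2 \<Longrightarrow> A 6 = 0 \<and> B 4 = 0 \<and> B 8 = 0" using xU[of "6"] by simp
  have h43: "A 1 = A (-4)" using pA[of "-4"] by simp
  have h44: "B 1 = B (-4)" using pB[of "-4"] by simp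
  have h45: "A 2 = A (-3)" using pA[of "-3"] by simp
  have h46: "B 2 = B (-3)" using pB[of "-3"] by simp
  have h47: "A 3 = A (-2)" using pA[of "-2"] by simp
  have h48: "B 3 = B (-2)" using pB[of "-2"] by simp
  have h49: "A 4 = A (-1)" using pA[of "-1"] by simp
  have h50: "B 4 = B (-1)" using pB[of "-1"] by simp
  have h51: "A 5 = A 0" using pA[of "0"] by simp
  have h52: "B 5 = B 0" using pB[of "0"] by simp
  have h53: "A 6 = A 1" using pA[of "1"] by simp
  have h54: "B 6 = B 1" using pB[of "1"] by simp
  have h55: "A 7 = A 2" using pA[of "2"] by simp
  have h56: "B 7 = B 2" using pB[of "2"] by simp
  have h57: "A 8 = A 3" using pA[of "3"] by simp
  have h58: "B 8 = B 3" using pB[of "3"] by simp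
  have h59: "rn (A 0) (A (-1)) (A 1) (B 0) + rn (B 0) (A 0) (B (-2)) (B 2) + rn (A 1) (A 0) (A 2) (B 1) + rn (B 1) (A 1) (B (-1)) (B 3) + rn (A 2) (A 1) (A 3) (B 2) + rn (B 2) (A 2) (B 0) (B 4) + rn (A 3) (A 2) (A 4) (B 3) + rn (B 3) (A 3) (B 1) (B 5) + rn (A 4) (A 3) (A 5) (B 4) + rn (B 4) (A 4) (B 2) (B 6) \<le> 1" using win by (simp add: eval_nat_numeral)
  show ?thesis using h1 h2 h3 h4 h5 h6 h7 h8 h9 h10 h11 h12 h13 h14 h15 h16 h17 h18 h19 h20 h21 h22 h23 h24 h25 h26 h27 h28 h29 h30 h31 h32 h33 h34 h35 h36 h37 h38 h39 h40 h41 h42 h43 h44 h45 h46 h47 h48 h49 h50 h51 h52 h53 h54 h55 h56 h57 h58 h59 unfolding rn_def c2_def by (smt (z3))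
qed

lemma core6:
  fixes A B :: "int \<Rightarrow> int"
  assumes bA: "\<And>k. 0 \<le> A k \<and> A k \<le> 2" and bB: "\<And>k. 0 \<le> B k \<and> B k \<le> 2"
  and rdfV: "\<And>k. A k = 0 \<Longrightarrow> A (k - 1) = 2 \<or> A (k + 1) = 2 \<or> B k = 2"
  and rdfU: "\<And>k. B k = 0 \<Longrightarrow> A k = 2 \<or> B (k - 2) = 2 \<or> B (k + 2) = 2"
  and xV: "\<And>k. A k = 2 \<Longrightarrow> A (k - 1) = 0 \<and> A (k + 1) = 0 \<and> B k = 0"
  and xU: "\<And>k. B k = 2 \<Longrightarrow> A k = 0 \<and> B (k - 2) = 0 \<and> B (k + 2) = 0"
  and pA: "\<And>k. A (k + 6) = A k" and pB: "\<And>k. B (k + 6) = B k"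
  and win: "(\<Sum>k<6. rn (A (int k)) (A (int k - 1)) (A (int k + 1)) (B (int k)) + rn (B (int k)) (A (int k)) (B (int k - 2)) (B (int k + 2))) \<le> 1"
  shows "A 2 \<noteq> 2 \<and> A 4 \<noteq> 2"
proof -
  have h1: "0 \<le> A (-1) \<and> A (-1) \<le> 2" using bA[of "-1"] by simp
  have h2: "0 \<le> A 0 \<and> A 0 \<le> 2" using bA[of "0"] by simp
  have h3: "0 \<le> A 1 \<and> A 1 \<le> 2" using bA[of "1"] by simp
  have h4: "0 \<le> A 2 \<and> A 2 \<le> 2" using bA[of "2"] by simp
  have h5: "0 \<le> A 3 \<and> A 3 \<le> 2" using bA[of "3"] by simp
  have h6: "0 \<le> A 4 \<and> A 4 \<le> 2" using bA[of "4"] by simp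
  have h7: "0 \<le> A 5 \<and> A 5 \<le> 2" using bA[of "5"] by simp
  have h8: "0 \<le> A 6 \<and> A 6 \<le> 2" using bA[of "6"] by simp
  have h9: "0 \<le> B (-2) \<and> B (-2) \<le> 2" using bB[of "-2"] by simp
  have h10: "0 \<le> B (-1) \<and> B (-1) \<le> 2" using bB[of "-1"] by simp
  have h11: "0 \<le> B 0 \<and> B 0 \<le> 2" using bB[of "0"] by simp
  have h12: "0 \<le> B 1 \<and> B 1 \<le> 2" using bB[of "1"] by simp
  have h13: "0 \<le> B 2 \<and> B 2 \<le> 2" using bB[of "2"] by simp
  have h14: "0 \<le> B 3 \<and> B 3 \<le> 2" using bB[of "3"] by simp
  have h15: "0 \<le> B 4 \<and> B 4 \<le> 2" using bB[of "4"] by simp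
  have h16: "0 \<le> B 5 \<and> B 5 \<le> 2" using bB[of "5"] by simp
  have h17: "0 \<le> B 6 \<and> B 6 \<le> 2" using bB[of "6"] by simp
  have h18: "0 \<le> B 7 \<and> B 7 \<le> 2" using bB[of "7"] by simp
  have h19: "A 0 = 0 \<Longrightarrow> A (-1) = 2 \<or> A 1 = 2 \<or> B 0 = 2" using rdfV[of "0"] by simp
  have h20: "B 0 = 0 \<Longrightarrow> A 0 = 2 \<or> B (-2) = 2 \<or> B 2 = 2" using rdfU[of "0"] by simp
  have h21: "A 1 = 0 \<Longrightarrow> A 0 = 2 \<or> A 2 = 2 \<or> B 1 = 2" using rdfV[of "1"] by simp
  have h22: "B 1 = 0 \<Longrightarrow> A 1 = 2 \<or> B (-1) = 2 \<or> B 3 = 2" using rdfU[of "1"] by simp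
  have h23: "A 2 = 0 \<Longrightarrow> A 1 = 2 \<or> A 3 = 2 \<or> B 2 = 2" using rdfV[of "2"] by simp
  have h24: "B 2 = 0 \<Longrightarrow> A 2 = 2 \<or> B 0 = 2 \<or> B 4 = 2" using rdfU[of "2"] by simp
  have h25: "A 3 = 0 \<Longrightarrow> A 2 = 2 \<or> A 4 = 2 \<or> B 3 = 2" using rdfV[of "3"] by simp
  have h26: "B 3 = 0 \<Longrightarrow> A 3 = 2 \<or> B 1 = 2 \<or> B 5 = 2" using rdfU[of "3"] by simp
  have h27: "A 4 = 0 \<Longrightarrow> A 3 = 2 \<or> A 5 = 2 \<or> B 4 = 2" using rdfV[of "4"] by simp
  have h28: "B 4 = 0 \<Longrightarrow> A 4 = 2 \<or> B 2 = 2 \<or> B 6 = 2" using rdfU[of "4"] by simp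
  have h29: "A 5 = 0 \<Longrightarrow> A 4 = 2 \<or> A 6 = 2 \<or> B 5 = 2" using rdfV[of "5"] by simp
  have h30: "B 5 = 0 \<Longrightarrow> A 5 = 2 \<or> B 3 = 2 \<or> B 7 = 2" using rdfU[of "5"] by simp
  have h31: "A 0 = 2 \<Longrightarrow> A (-1) = 0 \<and> A 1 = 0 \<and> B 0 = 0" using xV[of "0"] by simp
  have h32: "B 0 = 2 \<Longrightarrow> A 0 = 0 \<and> B (-2) = 0 \<and> B 2 = 0" using xU[of "0"] by simp
  have h33: "A 1 = 2 \<Longrightarrow> A 0 = 0 \<and> A 2 = 0 \<and> B 1 = 0" using xV[of "1"] by simp
  have h34: "B 1 = 2 \<Longrightarrow> A 1 = 0 \<and> B (-1) = 0 \<and> B 3 = 0" using xU[of "1"] by simp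
  have h35: "A 2 = 2 \<Longrightarrow> A 1 = 0 \<and> A 3 = 0 \<and> B 2 = 0" using xV[of "2"] by simp
  have h36: "B 2 = 2 \<Longrightarrow> A 2 = 0 \<and> B 0 = 0 \<and> B 4 = 0" using xU[of "2"] by simp
  have h37: "A 3 = 2 \<Longrightarrow> A 2 = 0 \<and> A 4 = 0 \<and> B 3 = 0" using xV[of "3"] by simp
  have h38: "B 3 = 2 \<Longrightarrow> A 3 = 0 \<and> B 1 = 0 \<and> B 5 = 0" using xU[of "3"] by simp
  have h39: "A 4 = 2 \<Longrightarrow> A 3 = 0 \<and> A 5 = 0 \<and> B 4 = 0" using xV[of "4"] by simp
  have h40: "B 4 = 2 \<Longrightarrow> A 4 = 0 \<and> B 2 = 0 \<and> B 6 = 0" using xU[of "4"] by simp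
  have h41: "A 5 = 2 \<Longrightarrow> A 4 = 0 \<and> A 6 = 0 \<and> B 5 = 0" using xV[of "5"] by simp
  have h42: "B 5 = 2 \<Longrightarrow> A 5 = 0 \<and> B 3 = 0 \<and> B 7 = 0" using xU[of "5"] by simp
  have h43: "A (-1) = 2 \<Longrightarrow> A (-2) = 0 \<and> A 0 = 0 \<and> B (-1) = 0" using xV[of "-1"] by simp
  have h44: "A 6 = 2 \<Longrightarrow> A 5 = 0 \<and> A 7 = 0 \<and> B 6 = 0" using xV[of "6"] by simp
  have h45: "B (-2) = 2 \<Longrightarrow> A (-2) = 0 \<and> B (-4) = 0 \<and> B 0 = 0" using xU[of "-2"] by simp
  have h46: "B (-1) = 2 \<Longrightarrow> A (-1) = 0 \<and> B (-3) = 0 \<and> B 1 = 0" using xU[of "-1"] by simp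
  have h47: "B 6 = 2 \<Longrightarrow> A 6 = 0 \<and> B 4 = 0 \<and> B 8 = 0" using xU[of "6"] by simp
  have h48: "B 7 = 2 \<Longrightarrow> A 7 = 0 \<and> B 5 = 0 \<and> B 9 = 0" using xU[of "7"] by simp
  have h49: "A 2 = A (-4)" using pA[of "-4"] by simp
  have h50: "B 2 = B (-4)" using pB[of "-4"] by simp
  have h51: "A 3 = A (-3)" using pA[of "-3"] by simp
  have h52: "B 3 = B (-3)" using pB[of "-3"] by simp
  have h53: "A 4 = A (-2)" using pA[of "-2"] by simp
  have h54: "B 4 = B (-2)" using pB[of "-2"] by simp
  have h55: "A 5 = A (-1)" using pA[of "-1"] by simp
  have h56: "B 5 = B (-1)" using pB[of "-1"] by simp
  have h57: "A 6 = A 0" using pA[of "0"] by simp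
  have h58: "B 6 = B 0" using pB[of "0"] by simp
  have h59: "A 7 = A 1" using pA[of "1"] by simp
  have h60: "B 7 = B 1" using pB[of "1"] by simp
  have h61: "A 8 = A 2" using pA[of "2"] by simp
  have h62: "B 8 = B 2" using pB[of "2"] by simp
  have h63: "A 9 = A 3" using pA[of "3"] by simp
  have h64: "B 9 = B 3" using pB[of "3"] by simp
  have h65: "rn (A 0) (A (-1)) (A 1) (B 0) + rn (B 0) (A 0) (B (-2)) (B 2) + rn (A 1) (A 0) (A 2) (B 1) + rn (B 1) (A 1) (B (-1)) (B 3) + rn (A 2) (A 1) (A 3) (B 2) + rn (B 2) (A 2) (B 0) (B 4) + rn (A 3) (A 2) (A 4) (B 3) + rn (B 3) (A 3) (B 1) (B 5) + rn (A 4) (A 3) (A 5) (B 4) + rn (B 4) (A 4) (B 2) (B 6) + rn (A 5) (A 4) (A 6) (B 5) + rn (B 5) (A 5) (B 3) (B 7) \<le> 1" using win by (simp add: eval_nat_numeral)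
  show ?thesis using h1 h2 h3 h4 h5 h6 h7 h8 h9 h10 h11 h12 h13 h14 h15 h16 h17 h18 h19 h20 h21 h22 h23 h24 h25 h26 h27 h28 h29 h30 h31 h32 h33 h34 h35 h36 h37 h38 h39 h40 h41 h42 h43 h44 h45 h46 h47 h48 h49 h50 h51 h52 h53 h54 h55 h56 h57 h58 h59 h60 h61 h62 h63 h64 h65 unfolding rn_def c2_def by (smt (z3))
qed


lemma window_bound:
  assumes n: "5 \<le> n" and rdf: "is_RDF n 2 f" and t: "t \<le> n" "t \<le> 7"
    and win: "r_f_set n 2 f (Vprime n i 7) \<le> 0.5"
  shows "(\<Sum>k<t. rn (int (f (V (idx n (i + int k))))) (int (f (V (idx n (i + (int k - 1))))))
            (int (f (V (idx n (i + (int k + 1)))))) (int (f (U (idx n (i + int k)))))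
          + rn (int (f (U (idx n (i + int k))))) (int (f (V (idx n (i + int k)))))
            (int (f (U (idx n (i + (int k - 2)))))) (int (f (U (idx n (i + (int k + 2))))))) \<le> 1"
proof -
  have n0: "0 < n" using n by simp
  define SV where "SV = (\<lambda>k. V (idx n (i + int k))) ` {..<t}"
  define SU where "SU = (\<lambda>k. U (idx n (i + int k))) ` {..<t}"
  have sub: "SV \<union> SU \<subseteq> Vprime n i 7"
  proof
    fix x assume "x \<in> SV \<union> SU"
    then obtain k where k: "k < t" "x = V (idx n (i + int k)) \<or> x = U (idx n (i + int k))"
      unfolding SV_def SU_def by blast
    have "i \<le> i + int k \<and> i + int k \<le> i + int 7 - 1" using k t by simp
    then show "x \<in> Vprime n i 7" using k unfolding Vprime_def idx_def by blast
  qed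
  have fin: "finite (Vprime n i 7)" using Vprime_sub[OF n0] finite_verts finite_subset by blast
  have "(\<Sum>w\<in>SV \<union> SU. r_f n 2 f w) \<le> (\<Sum>w\<in>Vprime n i 7. r_f n 2 f w)"
    by (rule sum_mono2[OF fin sub]) (use r_nonneg[OF n rdf] Vprime_sub[OF n0] in blast)
  also have "\<dots> \<le> 1/2" using win unfolding r_f_set_def by simp
  finally have s1: "(\<Sum>w\<in>SV \<union> SU. r_f n 2 f w) \<le> 1/2" .
  have disj: "SV \<inter> SU = {}" unfolding SV_def SU_def by auto
  have "(\<Sum>w\<in>SV \<union> SU. r_f n 2 f w) = (\<Sum>w\<in>SV. r_f n 2 f w) + (\<Sum>w\<in>SU. r_f n 2 f w)"
    by (rule sum.union_disjoint) (auto simp: SV_def SU_def disj)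
  moreover have "(\<Sum>w\<in>SV. r_f n 2 f w) = (\<Sum>k<t. r_f n 2 f (V (idx n (i + int k))))"
    unfolding SV_def by (rule sum.reindex_cong[OF _ refl]) (use inj_idx[OF n0 t(1), of i] in \<open>auto simp: inj_on_def\<close>)
  moreover have "(\<Sum>w\<in>SU. r_f n 2 f w) = (\<Sum>k<t. r_f n 2 f (U (idx n (i + int k))))"
    unfolding SU_def by (rule sum.reindex_cong[OF _ refl]) (use inj_idx[OF n0 t(1), of i] in \<open>auto simp: inj_on_def\<close>)
  ultimately have s2: "(\<Sum>k<t. r_f n 2 f (V (idx n (i + int k))) + r_f n 2 f (U (idx n (i + int k)))) \<le> 1/2"
    using s1 by (simp add: sum.distrib)
  have eqk: "\<And>k. r_f n 2 f (V (idx n (i + int k))) + r_f n 2 f (U (idx n (i + int k))) =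
     real_of_int (rn (int (f (V (idx n (i + int k))))) (int (f (V (idx n (i + (int k - 1))))))
            (int (f (V (idx n (i + (int k + 1)))))) (int (f (U (idx n (i + int k)))))
          + rn (int (f (U (idx n (i + int k))))) (int (f (V (idx n (i + int k)))))
            (int (f (U (idx n (i + (int k - 2)))))) (int (f (U (idx n (i + (int k + 2))))))) / 2"
  proof -
    fix k :: nat
    show "r_f n 2 f (V (idx n (i + int k))) + r_f n 2 f (U (idx n (i + int k))) =
     real_of_int (rn (int (f (V (idx n (i + int k))))) (int (f (V (idx n (i + (int k - 1))))))
            (int (f (V (idx n (i + (int k + 1)))))) (int (f (U (idx n (i + int k)))))
          + rn (int (f (U (idx n (i + int k))))) (int (f (V (idx n (i + int k)))))
            (int (f (U (idx n (i + (int k - 2)))))) (int (f (U (idx n (i + (int k + 2))))))) / 2"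
    proof -
    have e1: "i + int k - 1 = i + (int k - 1)" "i + int k + 1 = i + (int k + 1)"
      "i + int k - 2 = i + (int k - 2)" "i + int k + 2 = i + (int k + 2)" by simp_all
    show ?thesis
      using rV[OF n, of f "i + int k"] rU[OF n, of f "i + int k"] unfolding e1 by (simp add: add_divide_distrib)
    qed
  qed
  define S where "S = (\<Sum>k<t. rn (int (f (V (idx n (i + int k))))) (int (f (V (idx n (i + (int k - 1))))))
            (int (f (V (idx n (i + (int k + 1)))))) (int (f (U (idx n (i + int k)))))
          + rn (int (f (U (idx n (i + int k))))) (int (f (V (idx n (i + int k)))))
            (int (f (U (idx n (i + (int k - 2)))))) (int (f (U (idx n (i + (int k + 2)))))))"
  have "real_of_int S / 2 \<le> 1/2"
    using s2 unfolding eqk S_def of_int_sum sum_divide_distrib[symmetric] .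
  then have "real_of_int S \<le> 1" by linarith
  then have "S \<le> 1" by (simp only: of_int_le_1_iff)
  then show ?thesis unfolding S_def .
qed

theorem lemma2p6:
  fixes n :: nat and f :: "pvert \<Rightarrow> nat" and i :: int
  assumes "n \<ge> 5"
    and "is_RDF n 2 f"
    and "rdf_weight n f = gammaR n 2"
    and "\<forall>g. is_RDF n 2 g \<and> rdf_weight n g = gammaR n 2 \<longrightarrow>
               card (Vset n f 2) \<le> card (Vset n g 2)"
    and "r_f_set n 2 f (Vprime n i 7) \<le> 0.5"
  shows "V (idx n (i + 2)) \<notin> Vset n f 2 \<and> V (idx n (i + 4)) \<notin> Vset n f 2"
proof -
  note n = assms(1) and rdf = assms(2) and w = assms(3) and mn = assms(4) and win = assms(5)
  have n0: "0 < n" using n by simp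
  define A where "A = (\<lambda>k. int (f (V (idx n (i + k)))))"
  define B where "B = (\<lambda>k. int (f (U (idx n (i + k)))))"
  have fv: "\<And>x. x \<in> gp_verts n \<Longrightarrow> f x \<le> 2" using rdf unfolding is_RDF_def by auto
  have bA: "\<And>k. 0 \<le> A k \<and> A k \<le> 2" unfolding A_def using fv verts_idx[OF n0] by fastforce
  have bB: "\<And>k. 0 \<le> B k \<and> B k \<le> 2" unfolding B_def using fv verts_idx[OF n0] by fastforce
  have e1: "\<And>k. i + k - 1 = i + (k - 1)" "\<And>k. i + k + 1 = i + (k + 1)"
      "\<And>k. i + k - 2 = i + (k - 2)" "\<And>k. i + k + 2 = i + (k + 2)" by simp_all
  have rdfV: "\<And>k. A k = 0 \<Longrightarrow> A (k - 1) = 2 \<or> A (k + 1) = 2 \<or> B k = 2"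
  proof -
    fix k assume "A k = 0"
    then have "f (V (idx n (i + k))) = 0" unfolding A_def by simp
    then obtain z where z: "gp_adj n 2 (V (idx n (i + k))) z" "f z = 2"
      using rdf verts_idx[OF n0] unfolding is_RDF_def by blast
    then show "A (k - 1) = 2 \<or> A (k + 1) = 2 \<or> B k = 2"
      unfolding adjV[OF n] A_def B_def e1 by auto
  qed
  have rdfU: "\<And>k. B k = 0 \<Longrightarrow> A k = 2 \<or> B (k - 2) = 2 \<or> B (k + 2) = 2"
  proof -
    fix k assume "B k = 0"
    then have "f (U (idx n (i + k))) = 0" unfolding B_def by simp
    then obtain z where z: "gp_adj n 2 (U (idx n (i + k))) z" "f z = 2"
      using rdf verts_idx[OF n0] unfolding is_RDF_def by blast
    then show "A k = 2 \<or> B (k - 2) = 2 \<or> B (k + 2) = 2"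
      unfolding adjU[OF n] A_def B_def e1 by auto
  qed
  have xV: "\<And>k. A k = 2 \<Longrightarrow> A (k - 1) = 0 \<and> A (k + 1) = 0 \<and> B k = 0"
  proof -
    fix k assume "A k = 2"
    then have f2: "f (V (idx n (i + k))) = 2" unfolding A_def by simp
    have "\<And>y. gp_adj n 2 (V (idx n (i + k))) y \<Longrightarrow> f y = 0"
      using Xlem[OF n rdf w mn _ f2] verts_idx[OF n0] by blast
    then show "A (k - 1) = 0 \<and> A (k + 1) = 0 \<and> B k = 0"
      unfolding A_def B_def using adjV[OF n, of "i + k"] unfolding e1 by simp
  qed
  have xU: "\<And>k. B k = 2 \<Longrightarrow> A k = 0 \<and> B (k - 2) = 0 \<and> B (k + 2) = 0"
  proof -
    fix k assume "B k = 2"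
    then have f2: "f (U (idx n (i + k))) = 2" unfolding B_def by simp
    have "\<And>y. gp_adj n 2 (U (idx n (i + k))) y \<Longrightarrow> f y = 0"
      using Xlem[OF n rdf w mn _ f2] verts_idx[OF n0] by blast
    then show "A k = 0 \<and> B (k - 2) = 0 \<and> B (k + 2) = 0"
      unfolding A_def B_def using adjU[OF n, of "i + k"] unfolding e1 by simp
  qed
  have per: "\<And>k. A (k + int n) = A k" "\<And>k. B (k + int n) = B k"
  proof -
    fix k
    have "idx n (i + (k + int n)) = idx n (i + k)" unfolding idx_def by (simp add: add.assoc[symmetric])
    then show "A (k + int n) = A k" "B (k + int n) = B k" unfolding A_def B_def by simp_all
  qed
  have W: "\<And>t. t \<le> n \<Longrightarrow> t \<le> 7 \<Longrightarrow> (\<Sum>k<t. rn (A (int k)) (A (int k - 1)) (A (int k + 1)) (B (int k)) + rn (B (int k)) (A (int k)) (B (int k - 2)) (B (int k + 2))) \<le> 1"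
    unfolding A_def B_def using window_bound[OF n rdf _ _ win] by simp
  have res: "A 2 \<noteq> 2 \<and> A 4 \<noteq> 2"
  proof (cases "n = 5")
    case True
    show ?thesis by (rule core5[OF bA bB rdfV rdfU xV xU]) (use per W[of 5] True in auto)
  next
    case False
    show ?thesis
    proof (cases "n = 6")
      case True
      show ?thesis by (rule core6[OF bA bB rdfV rdfU xV xU]) (use per W[of 6] True in auto)
    next
      case False
      have n7: "7 \<le> n" using n \<open>n \<noteq> 5\<close> False by simp
      show ?thesis by (rule core7[OF bA bB rdfV rdfU xV xU W]) (use n7 in simp_all)
    qed
  qed
  then show ?thesis unfolding A_def using Vset2[OF n0] by simp
qed

end
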